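(* Let $L\subseteq\mathbb{C}^n$ be a linear subspace and $m\ge1$, and let $L(m)\subseteq(\mathbb{C}^n)^m=\mathbb{C}^{[m]\times[n]}$ be its $m$-thickening. Then the linear map \[ \gamma:(R_{L(m)})_1\to(R_L)_m,\qquad \gamma(z_S)=\prod_{i=1}^m z_{S_{i,*}}\quad(S\subseteq[m]\times[n]), \] is well defined and surjective.
   Context: The $m$-thickening $L(m)$ is the image of $L$ under the diagonal embedding $\mathbb{C}^n\hookrightarrow(\mathbb{C}^n)^m$; its coordinates are indexed by $[m]\times[n]$. For $S\subseteq[m]\times[n]$, $S_{i,*}=\{j:(i,j)\in S\}$. For a linear subspace $L'\subseteq\mathbb{C}^N$ with matroid $M'$ (bases: $\dim L'$-subsets $B$ with $L'\to\mathbb{C}^B$ an isomorphism), fix a matrix with row space $L'$ and columns $A_i$; for each circuit $C$ fix the dependence $\sum_{i\in C}\alpha_{C,i}A_i=0$; for $A'\subseteq[N]\setminus C$ let $f_C^{A'}(z)=\sum_{i\in C}\alpha_{C,i}z_{A'\cup\{i\}}$. Then $I_{L'}^{\mathrm{SE}}$ is the ideal of $\mathbb{C}[z_S:S\subseteq[N]]$ generated by all $z_Sz_T-z_{S\cup T}z_{S\cap T}$ and all $f_C^{A'}$, and $R_{L'}=\mathbb{C}[z_S:S\subseteq[N]]/I_{L'}^{\mathrm{SE}}$, graded by polynomial degree in the $z$'s; $(R_{L'})_k$ denotes its degree-$k$ part. *)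

theory Defs
  imports Complex_Main "HOL-Library.Poly_Mapping"
begin

text \<open>Polynomials over the complex numbers in variables z_S indexed by sets S of
  coordinates: a polynomial is a finitely supported map from monomials
  (finitely supported exponent maps on variables) to coefficients.\<close>

type_synonym 'e zpoly = "('e set \<Rightarrow>\<^sub>0 nat) \<Rightarrow>\<^sub>0 complex"

definition zvar :: "'e set \<Rightarrow> 'e zpoly" where
  "zvar S = Poly_Mapping.single (Poly_Mapping.single S 1) 1"

definition pvars :: "'e set \<Rightarrow> 'e zpoly set" where
  "pvars E = {p. \<forall>\<mu>\<in>Poly_Mapping.keys p. \<forall>S\<in>Poly_Mapping.keys \<mu>. S \<subseteq> E}"

definition hom_polys :: "'e set \<Rightarrow> nat \<Rightarrow> 'e zpoly set" where
  "hom_polys E k = {p \<in> pvars E. \<forall>\<mu>\<in>Poly_Mapping.keys p. (\<Sum>S\<in>Poly_Mapping.keys \<mu>. Poly_Mapping.lookup \<mu> S) = k}"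

definition gen_ideal :: "'e set \<Rightarrow> 'e zpoly set \<Rightarrow> 'e zpoly set" where
  "gen_ideal E G = {p. \<exists>F c. finite F \<and> F \<subseteq> G \<and> (\<forall>g\<in>F. c g \<in> pvars E)
                        \<and> p = (\<Sum>g\<in>F. c g * g)}"

definition is_csubspace :: "'e set \<Rightarrow> ('e \<Rightarrow> complex) set \<Rightarrow> bool" where
  "is_csubspace E L \<longleftrightarrow> (\<forall>x\<in>L. \<forall>i. i \<notin> E \<longrightarrow> x i = 0) \<and> (\<lambda>_. 0) \<in> L \<and>
     (\<forall>x\<in>L. \<forall>y\<in>L. (\<lambda>i. x i + y i) \<in> L) \<and> (\<forall>c. \<forall>x\<in>L. (\<lambda>i. c * x i) \<in> L)"

text \<open>alpha (restricted to D) is a linear dependence among the columns A_i (i in D) of a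
  matrix whose row space is L: sum_{i in D} alpha_i A_i = 0 iff the row vector
  alpha annihilates every row, i.e. every element of L.\<close>
definition col_dep :: "('e \<Rightarrow> complex) set \<Rightarrow> 'e set \<Rightarrow> ('e \<Rightarrow> complex) \<Rightarrow> bool" where
  "col_dep L D \<alpha> \<longleftrightarrow> (\<exists>i\<in>D. \<alpha> i \<noteq> 0) \<and> (\<forall>x\<in>L. (\<Sum>i\<in>D. \<alpha> i * x i) = 0)"

definition is_circuit :: "'e set \<Rightarrow> ('e \<Rightarrow> complex) set \<Rightarrow> 'e set \<Rightarrow> bool" where
  "is_circuit E L C \<longleftrightarrow> C \<subseteq> E \<and> (\<exists>\<alpha>. col_dep L C \<alpha>) \<and>
     (\<forall>D. D \<subset> C \<longrightarrow> \<not> (\<exists>\<alpha>. col_dep L D \<alpha>))"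

definition f_circ :: "'e set \<Rightarrow> ('e \<Rightarrow> complex) \<Rightarrow> 'e set \<Rightarrow> 'e zpoly" where
  "f_circ C \<alpha> A' = (\<Sum>i\<in>C. Poly_Mapping.single 0 (\<alpha> i) * zvar (insert i A'))"

definition SE_gens :: "'e set \<Rightarrow> ('e \<Rightarrow> complex) set \<Rightarrow> 'e zpoly set" where
  "SE_gens E L =
     {zvar S * zvar T - zvar (S \<union> T) * zvar (S \<inter> T) | S T. S \<subseteq> E \<and> T \<subseteq> E}
   \<union> {f_circ C \<alpha> A' | C \<alpha> A'. is_circuit E L C \<and> col_dep L C \<alpha> \<and> A' \<subseteq> E - C}"

definition SE_ideal :: "'e set \<Rightarrow> ('e \<Rightarrow> complex) set \<Rightarrow> 'e zpoly set" where
  "SE_ideal E L = gen_ideal E (SE_gens E L)"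

definition thick_ground :: "nat \<Rightarrow> nat \<Rightarrow> (nat \<times> nat) set" where
  "thick_ground m n = {0..<m} \<times> {0..<n}"

text \<open>The m-thickening L(m): image of L under the diagonal embedding.\<close>
definition thicken :: "nat \<Rightarrow> nat \<Rightarrow> (nat \<Rightarrow> complex) set \<Rightarrow> (nat \<times> nat \<Rightarrow> complex) set" where
  "thicken m n L = {(\<lambda>(i,j). if i < m \<and> j < n then x j else 0) | x. x \<in> L}"

definition row_of :: "(nat \<times> nat) set \<Rightarrow> nat \<Rightarrow> nat set" where
  "row_of S i = {j. (i, j) \<in> S}"

definition gamma :: "nat \<Rightarrow> (nat \<times> nat) zpoly \<Rightarrow> nat zpoly" where
  "gamma m q = (\<Sum>S\<in>{S. Poly_Mapping.single S 1 \<in> Poly_Mapping.keys q}.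
      Poly_Mapping.single 0 (Poly_Mapping.lookup q (Poly_Mapping.single S 1)) * (\<Prod>i<m. zvar (row_of S i)))"

end

theory Submission
  imports Defs
begin

lemma lookup_mult_single:
  "Poly_Mapping.lookup (c * Poly_Mapping.single \<nu> b) \<kappa> = Sum_any (\<lambda>l. Poly_Mapping.lookup c l * b when \<kappa> = l + \<nu>)"
proof -
  have "\<And>a. Sum_any (\<lambda>aa. Poly_Mapping.lookup (Poly_Mapping.single \<nu> b) aa when \<kappa> = a + aa) = (b when \<kappa> = a + \<nu>)"
  proof -
    fix a
    have eq: "(\<lambda>aa. Poly_Mapping.lookup (Poly_Mapping.single \<nu> b) aa when \<kappa> = a + aa) = (\<lambda>aa. (b when \<kappa> = a + aa) when \<nu> = aa)"
      by (rule ext) (simp add: lookup_single when_def)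
    show "Sum_any (\<lambda>aa. Poly_Mapping.lookup (Poly_Mapping.single \<nu> b) aa when \<kappa> = a + aa) = (b when \<kappa> = a + \<nu>)"
      unfolding eq by (rule Sum_any_when_equal')
  qed
  then show ?thesis unfolding lookup_mult by (simp add: mult_when)
qed

lemma lookup_mult_single_none:
  assumes "\<And>l. \<kappa> \<noteq> l + \<nu>"
  shows "Poly_Mapping.lookup (c * Poly_Mapping.single \<nu> b) \<kappa> = 0"
  unfolding lookup_mult_single using assms by simp

lemma lookup_mult_single_hit:
  fixes \<mu> \<nu> :: "'a::cancel_comm_monoid_add"
  shows "Poly_Mapping.lookup (c * Poly_Mapping.single \<nu> b) (\<mu> + \<nu>) = Poly_Mapping.lookup c \<mu> * b"
proof -
  have "(\<lambda>l. Poly_Mapping.lookup c l * b when \<mu> + \<nu> = l + \<nu>) = (\<lambda>l. Poly_Mapping.lookup c l * b when l = \<mu>)"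
    by (auto simp: when_def)
  then show ?thesis unfolding lookup_mult_single by simp
qed

type_synonym 'e mono = "'e set \<Rightarrow>\<^sub>0 nat"

lemma single1_eq_plus_single1:
  fixes l :: "'e mono"
  assumes "Poly_Mapping.single U 1 = l + Poly_Mapping.single X 1"
  shows "X = U \<and> l = 0"
proof -
  have "Poly_Mapping.lookup (Poly_Mapping.single U 1) X = Poly_Mapping.lookup l X + 1"
    using assms by (simp add: lookup_add)
  then have XU: "X = U" by (cases "U = X") (simp_all add: lookup_single)
  then have "0 + Poly_Mapping.single X 1 = l + Poly_Mapping.single X 1" using assms by simp
  then have "l = 0" by (metis add_right_cancel)
  with XU show ?thesis by simp
qed

lemma lookup_mult_zvar:
  fixes c :: "'e zpoly"
  shows "Poly_Mapping.lookup (c * zvar X) (Poly_Mapping.single U 1) = (if X = U then Poly_Mapping.lookup c 0 else 0)"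
proof (cases "X = U")
  case True
  then show ?thesis unfolding zvar_def using lookup_mult_single_hit[of c "Poly_Mapping.single U 1" 1 0] by simp
next
  case False
  have "Poly_Mapping.single U 1 \<noteq> l + Poly_Mapping.single X 1" for l :: "'e mono"
    by (rule notI, drule single1_eq_plus_single1, simp add: False)
  then show ?thesis unfolding zvar_def
    using lookup_mult_single_none False by metis
qed

lemma zvar_mult: "zvar S * zvar T = Poly_Mapping.single (Poly_Mapping.single S 1 + Poly_Mapping.single T 1) 1"
  unfolding zvar_def by (simp add: mult_single)

lemma lookup_mult_zvar2:
  fixes c :: "'e zpoly"
  shows "Poly_Mapping.lookup (c * (zvar S * zvar T)) (Poly_Mapping.single U 1) = 0"
  unfolding zvar_mult
proof (rule lookup_mult_single_none)
  fix l :: "'e mono"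
  show "Poly_Mapping.single U 1 \<noteq> l + (Poly_Mapping.single S 1 + Poly_Mapping.single T 1)"
  proof
    assume h: "Poly_Mapping.single U 1 = l + (Poly_Mapping.single S 1 + Poly_Mapping.single T 1)"
    then have "Poly_Mapping.single U 1 = (l + Poly_Mapping.single S 1) + Poly_Mapping.single T 1"
      by (simp add: add.assoc)
    then have "T = U \<and> l + Poly_Mapping.single S 1 = 0" by (rule single1_eq_plus_single1)
    then have "Poly_Mapping.lookup (l + Poly_Mapping.single S 1) S = 0" by simp
    then show False by (simp add: lookup_add)
  qed
qed


lemma pvars_add: "p \<in> pvars E \<Longrightarrow> q \<in> pvars E \<Longrightarrow> p + q \<in> pvars E"
  unfolding pvars_def using keys_add[of p q] by blast

lemma pvars_uminus: "p \<in> pvars E \<Longrightarrow> - p \<in> pvars E"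
  unfolding pvars_def by simp

lemma pvars_zero: "0 \<in> pvars E"
  unfolding pvars_def by simp

lemma pvars_single0: "Poly_Mapping.single 0 a \<in> pvars E"
  unfolding pvars_def by simp

lemma pvars_one: "1 \<in> pvars E"
  unfolding pvars_def by simp

lemma pvars_zvar: "S \<subseteq> E \<Longrightarrow> zvar S \<in> pvars E"
  unfolding pvars_def zvar_def by simp

lemma pvars_mult: 
  fixes p q :: "'e zpoly"
  assumes "p \<in> pvars E" "q \<in> pvars E" shows "p * q \<in> pvars E"
  unfolding pvars_def mem_Collect_eq
proof (intro ballI)
  fix \<mu> S assume mu: "\<mu> \<in> Poly_Mapping.keys (p * q)" and S: "S \<in> Poly_Mapping.keys \<mu>"
  from mu keys_mult[of p q] obtain a b where ab: "\<mu> = a + b" "a \<in> Poly_Mapping.keys p" "b \<in> Poly_Mapping.keys q"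
    by blast
  from S ab(1) keys_add[of a b] have "S \<in> Poly_Mapping.keys a \<or> S \<in> Poly_Mapping.keys b" by blast
  then show "S \<subseteq> E" using assms ab unfolding pvars_def by blast
qed

lemma pvars_sum: "(\<And>i. i \<in> I \<Longrightarrow> f i \<in> pvars E) \<Longrightarrow> sum f I \<in> pvars E"
  by (induction I rule: infinite_finite_induct) (auto intro: pvars_add pvars_zero)

lemma pvars_prod: 
  fixes f :: "'a \<Rightarrow> 'e zpoly"
  shows "(\<And>i. i \<in> I \<Longrightarrow> f i \<in> pvars E) \<Longrightarrow> prod f I \<in> pvars E"
  by (induction I rule: infinite_finite_induct) (auto intro: pvars_mult pvars_one)

lemma ideal_zero: "0 \<in> gen_ideal E G"
  unfolding gen_ideal_def by (rule CollectI, rule exI[of _ "{}"]) auto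

lemma ideal_gen: "g \<in> G \<Longrightarrow> g \<in> gen_ideal E G"
  unfolding gen_ideal_def
  by (rule CollectI, rule exI[of _ "{g}"], rule exI[of _ "\<lambda>_. 1"]) (auto simp: pvars_one)

lemma ideal_add:
  fixes p q :: "'e zpoly"
  assumes "p \<in> gen_ideal E G" "q \<in> gen_ideal E G" shows "p + q \<in> gen_ideal E G"
proof -
  obtain F1 c1 where 1: "finite F1" "F1 \<subseteq> G" "\<forall>g\<in>F1. c1 g \<in> pvars E" "p = (\<Sum>g\<in>F1. c1 g * g)"
    using assms(1) unfolding gen_ideal_def by blast
  obtain F2 c2 where 2: "finite F2" "F2 \<subseteq> G" "\<forall>g\<in>F2. c2 g \<in> pvars E" "q = (\<Sum>g\<in>F2. c2 g * g)"
    using assms(2) unfolding gen_ideal_def by blast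
  define c where "c g = (if g \<in> F1 then c1 g else 0) + (if g \<in> F2 then c2 g else 0)" for g
  have fin: "finite (F1 \<union> F2)" using 1 2 by simp
  have "(\<Sum>g\<in>F1 \<union> F2. c g * g) = (\<Sum>g\<in>F1 \<union> F2. (if g \<in> F1 then c1 g * g else 0)) + (\<Sum>g\<in>F1 \<union> F2. (if g \<in> F2 then c2 g * g else 0))"
    unfolding sum.distrib[symmetric] by (rule sum.cong) (auto simp: c_def distrib_right)
  also have "\<dots> = p + q"
  proof -
    have e1: "(F1 \<union> F2) \<inter> F1 = F1" "(F1 \<union> F2) \<inter> F2 = F2" by blast+
    show ?thesis unfolding 1(4) 2(4)
      using sum.inter_restrict[OF fin, of "\<lambda>g. c1 g * g" F1] sum.inter_restrict[OF fin, of "\<lambda>g. c2 g * g" F2]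
      unfolding e1 by simp
  qed
  finally have "p + q = (\<Sum>g\<in>F1 \<union> F2. c g * g)" by simp
  moreover have "\<forall>g\<in>F1 \<union> F2. c g \<in> pvars E"
    using 1(3) 2(3) unfolding c_def by (auto intro!: pvars_add pvars_zero)
  ultimately show ?thesis unfolding gen_ideal_def using fin 1(2) 2(2)
    by (intro CollectI exI[of _ "F1 \<union> F2"] exI[of _ c]) blast
qed

lemma ideal_mult:
  fixes p r :: "'e zpoly"
  assumes "p \<in> gen_ideal E G" "r \<in> pvars E" shows "r * p \<in> gen_ideal E G"
proof -
  obtain F1 c1 where 1: "finite F1" "F1 \<subseteq> G" "\<forall>g\<in>F1. c1 g \<in> pvars E" "p = (\<Sum>g\<in>F1. c1 g * g)"
    using assms(1) unfolding gen_ideal_def by blast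
  have "r * p = (\<Sum>g\<in>F1. (r * c1 g) * g)" unfolding 1(4) by (simp add: sum_distrib_left mult.assoc)
  moreover have "\<forall>g\<in>F1. r * c1 g \<in> pvars E" using 1(3) assms(2) by (auto intro: pvars_mult)
  ultimately show ?thesis unfolding gen_ideal_def using 1(1,2)
    by (intro CollectI exI[of _ F1] exI[of _ "\<lambda>g. r * c1 g"]) blast
qed

lemma ideal_mult_right:
  fixes p r :: "'e zpoly"
  assumes "p \<in> gen_ideal E G" "r \<in> pvars E" shows "p * r \<in> gen_ideal E G"
  using ideal_mult[OF assms] by (simp add: mult.commute)

lemma ideal_uminus:
  fixes p :: "'e zpoly"
  assumes "p \<in> gen_ideal E G" shows "- p \<in> gen_ideal E G"
  using ideal_mult[OF assms pvars_single0[of "-1"]]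
  by (metis mult_minus_left mult_1 single_one single_uminus)

lemma ideal_diff:
  fixes p q :: "'e zpoly"
  assumes "p \<in> gen_ideal E G" "q \<in> gen_ideal E G" shows "p - q \<in> gen_ideal E G"
  using ideal_add[OF assms(1) ideal_uminus[OF assms(2)]] by simp

lemma ideal_sum:
  fixes f :: "'a \<Rightarrow> 'e zpoly"
  shows "(\<And>i. i \<in> I \<Longrightarrow> f i \<in> gen_ideal E G) \<Longrightarrow> sum f I \<in> gen_ideal E G"
  by (induction I rule: infinite_finite_induct) (auto intro: ideal_add ideal_zero)

lemma ideal_trans:
  fixes p q r :: "'e zpoly"
  assumes "p - q \<in> gen_ideal E G" "q - r \<in> gen_ideal E G" shows "p - r \<in> gen_ideal E G"
  using ideal_add[OF assms] by simp


lemma binom: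
  assumes "S \<subseteq> E" "T \<subseteq> E"
  shows "zvar S * zvar T - zvar (S \<union> T) * zvar (S \<inter> T) \<in> SE_ideal E L"
  unfolding SE_ideal_def by (rule ideal_gen) (unfold SE_gens_def, use assms in blast)

lemma move_lemma:
  assumes "X \<subseteq> E" "Y \<subseteq> E" "j \<in> E" "j \<notin> X"
  shows "zvar (insert j X) * zvar Y - zvar (X \<union> Y) * zvar (insert j (X \<inter> Y)) \<in> SE_ideal E L"
proof (cases "j \<in> Y")
  case True
  have "insert j X \<union> Y = X \<union> Y" "insert j X \<inter> Y = insert j (X \<inter> Y)" using True by blast+
  then show ?thesis using binom[of "insert j X" E Y L] assms by simp
next
  case False
  have 1: "zvar (insert j X) * zvar Y - zvar (insert j (X \<union> Y)) * zvar (X \<inter> Y) \<in> SE_ideal E L"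
  proof -
    have "insert j X \<union> Y = insert j (X \<union> Y)" "insert j X \<inter> Y = X \<inter> Y" using False by blast+
    then show ?thesis using binom[of "insert j X" E Y L] assms by simp
  qed
  have 2: "zvar (X \<union> Y) * zvar (insert j (X \<inter> Y)) - zvar (insert j (X \<union> Y)) * zvar (X \<inter> Y) \<in> SE_ideal E L"
  proof -
    have eq: "(X \<union> Y) \<union> insert j (X \<inter> Y) = insert j (X \<union> Y)" "(X \<union> Y) \<inter> insert j (X \<inter> Y) = X \<inter> Y" using False assms(4) by blast+
    have "X \<union> Y \<subseteq> E" "insert j (X \<inter> Y) \<subseteq> E" using assms by auto
    from binom[OF this, of L] show ?thesis unfolding eq .
  qed
  show ?thesis using ideal_diff[OF 1[unfolded SE_ideal_def] 2[unfolded SE_ideal_def]] unfolding SE_ideal_def by simp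
qed

fun Wr :: "(nat \<Rightarrow> 'e set) \<Rightarrow> nat \<Rightarrow> 'e set" where
  "Wr B 0 = B 0" | "Wr B (Suc m) = Wr B m \<inter> B (Suc m)"

fun Gp :: "(nat \<Rightarrow> 'e set) \<Rightarrow> nat \<Rightarrow> 'e zpoly" where
  "Gp B 0 = 1" | "Gp B (Suc m) = Gp B m * zvar (Wr B m \<union> B (Suc m))"

lemma Wr_sub: "k \<le> m \<Longrightarrow> Wr B m \<subseteq> B k"
  by (induction m) (auto simp: le_Suc_eq)

lemma Wr_subE: "(\<forall>k\<le>m. B k \<subseteq> E) \<Longrightarrow> Wr B m \<subseteq> E"
  using Wr_sub[of 0 m B] by auto

lemma Gp_pvars: "(\<forall>k\<le>m. B k \<subseteq> E) \<Longrightarrow> Gp B m \<in> pvars E"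
proof (induction m)
  case 0 then show ?case by (simp add: pvars_one)
next
  case (Suc m)
  then have "Wr B m \<subseteq> E" using Wr_subE[of m B E] by auto
  with Suc show ?case by (auto intro!: pvars_mult pvars_zvar)
qed

lemma lemA0:
  assumes "\<forall>k\<le>m. B k \<subseteq> E"
  shows "(\<Prod>k<Suc m. zvar (B k)) - Gp B m * zvar (Wr B m) \<in> SE_ideal E L"
  using assms
proof (induction m)
  case 0 then show ?case unfolding SE_ideal_def by (simp add: ideal_zero)
next
  case (Suc m)
  define P where "P = (\<Prod>k<Suc m. zvar (B k))"
  define W where "W = Wr B m"
  define Bm where "Bm = B (Suc m)"
  have BE: "Bm \<subseteq> E" "W \<subseteq> E" using Suc.prems Wr_subE[of m B E] unfolding Bm_def W_def by auto
  have 1: "P * zvar Bm - Gp B m * zvar W * zvar Bm \<in> SE_ideal E L"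
    using ideal_mult_right[OF Suc.IH[unfolded SE_ideal_def] pvars_zvar[OF BE(1)]] Suc.prems
    unfolding SE_ideal_def P_def W_def by (simp add: algebra_simps)
  have 2: "Gp B m * (zvar W * zvar Bm - zvar (W \<union> Bm) * zvar (W \<inter> Bm)) \<in> SE_ideal E L"
    using ideal_mult[OF binom[OF BE(2) BE(1), unfolded SE_ideal_def] Gp_pvars] Suc.prems
    unfolding SE_ideal_def by simp
  have "P * zvar Bm - Gp B m * zvar (W \<union> Bm) * zvar (W \<inter> Bm) \<in> SE_ideal E L"
    using ideal_add[OF 1[unfolded SE_ideal_def] 2[unfolded SE_ideal_def]] unfolding SE_ideal_def
    by (simp add: algebra_simps)
  then show ?case unfolding P_def W_def Bm_def by (simp add: mult.assoc)
qed

lemma lemA: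
  assumes "\<forall>k\<le>m. B k \<subseteq> E" "s \<le> m" "j \<in> E" "j \<notin> B s"
  shows "(\<Prod>k<Suc m. zvar (if k = s then insert j (B k) else B k)) - Gp B m * zvar (insert j (Wr B m)) \<in> SE_ideal E L"
  using assms
proof (induction m arbitrary: s)
  case 0 then show ?case unfolding SE_ideal_def by (simp add: ideal_zero)
next
  case (Suc m)
  define W where "W = Wr B m"
  define Bm where "Bm = B (Suc m)"
  have BE: "Bm \<subseteq> E" "W \<subseteq> E" using Suc.prems Wr_subE[of m B E] unfolding Bm_def W_def by auto
  have Gp: "Gp B m \<in> pvars E" by (intro Gp_pvars) (use Suc.prems in auto)
  show ?case
  proof (cases "s \<le> m")
    case True
    define P where "P = (\<Prod>k<Suc m. zvar (if k = s then insert j (B k) else B k))"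
    have jW: "j \<notin> W" using Wr_sub[OF True, of B] Suc.prems unfolding W_def by auto
    have 1: "P * zvar Bm - Gp B m * zvar (insert j W) * zvar Bm \<in> SE_ideal E L"
      using ideal_mult_right[OF Suc.IH[OF _ True, unfolded SE_ideal_def] pvars_zvar[OF BE(1)]] Suc.prems
      unfolding SE_ideal_def P_def W_def by (simp add: algebra_simps)
    have 2: "Gp B m * (zvar (insert j W) * zvar Bm - zvar (W \<union> Bm) * zvar (insert j (W \<inter> Bm))) \<in> SE_ideal E L"
      using ideal_mult[OF move_lemma[OF BE(2) BE(1) Suc.prems(3) jW, unfolded SE_ideal_def] Gp]
      unfolding SE_ideal_def by simp
    have 3: "P * zvar Bm - Gp B m * zvar (W \<union> Bm) * zvar (insert j (W \<inter> Bm)) \<in> SE_ideal E L"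
      using ideal_add[OF 1[unfolded SE_ideal_def] 2[unfolded SE_ideal_def]] unfolding SE_ideal_def
      by (simp add: algebra_simps)
    have "(\<Prod>k<Suc (Suc m). zvar (if k = s then insert j (B k) else B k)) = P * zvar Bm"
      using True unfolding P_def Bm_def by simp
    then show ?thesis using 3 unfolding W_def Bm_def by (simp add: mult.assoc)
  next
    case False
    then have s: "s = Suc m" using Suc.prems by simp
    define P where "P = (\<Prod>k<Suc m. zvar (B k))"
    have jB: "j \<notin> Bm" using Suc.prems s unfolding Bm_def by simp
    have 1: "P * zvar (insert j Bm) - Gp B m * zvar W * zvar (insert j Bm) \<in> SE_ideal E L"
      using ideal_mult_right[OF lemA0[of m B E L, unfolded SE_ideal_def] pvars_zvar[of "insert j Bm" E]] Suc.prems BE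
      unfolding SE_ideal_def P_def W_def by (simp add: algebra_simps)
    have 2: "Gp B m * (zvar (insert j Bm) * zvar W - zvar (Bm \<union> W) * zvar (insert j (Bm \<inter> W))) \<in> SE_ideal E L"
      using ideal_mult[OF move_lemma[OF BE(1) BE(2) Suc.prems(3) jB, unfolded SE_ideal_def] Gp]
      unfolding SE_ideal_def by simp
    have 3: "P * zvar (insert j Bm) - Gp B m * zvar (W \<union> Bm) * zvar (insert j (W \<inter> Bm)) \<in> SE_ideal E L"
      using ideal_add[OF 1[unfolded SE_ideal_def] 2[unfolded SE_ideal_def]] unfolding SE_ideal_def
      by (simp add: algebra_simps Un_commute Int_commute)
    have "(\<Prod>k<Suc (Suc m). zvar (if k = s then insert j (B k) else B k)) = P * zvar (insert j Bm)"
      using s unfolding P_def Bm_def by simp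
    then show ?thesis using 3 unfolding W_def Bm_def by (simp add: mult.assoc)
  qed
qed





declare One_nat_def [simp del]

definition Pr :: "nat \<Rightarrow> (nat \<times> nat) set \<Rightarrow> nat zpoly" where
  "Pr m S = (\<Prod>i<m. zvar (row_of S i))"

definition dom1 :: "'e zpoly \<Rightarrow> 'e set set" where
  "dom1 q = {S. Poly_Mapping.single S 1 \<in> Poly_Mapping.keys q}"

lemma gamma_def2: "gamma m q = (\<Sum>S\<in>dom1 q. Poly_Mapping.single 0 (Poly_Mapping.lookup q (Poly_Mapping.single S 1)) * Pr m S)"
  unfolding gamma_def dom1_def Pr_def by simp

lemma single1_inj: 
  assumes h: "Poly_Mapping.single S (1::nat) = Poly_Mapping.single T 1" shows "S = T"
proof (rule ccontr)
  assume "S \<noteq> T"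
  then have "Poly_Mapping.lookup (Poly_Mapping.single S (1::nat)) T = 0" by (simp add: lookup_single)
  moreover have "Poly_Mapping.lookup (Poly_Mapping.single T (1::nat)) T = 1" by simp
  ultimately show False using h by simp
qed

lemma single1_eq_iff [simp]: "Poly_Mapping.single S (1::nat) = Poly_Mapping.single T 1 \<longleftrightarrow> S = T"
  by (auto dest: single1_inj)

lemma finite_dom1: "finite (dom1 q)"
proof -
  have "dom1 q = (\<lambda>S. Poly_Mapping.single S (1::nat)) -` Poly_Mapping.keys q" unfolding dom1_def by auto
  moreover have "inj (\<lambda>S. Poly_Mapping.single S (1::nat))" by (rule injI) (erule single1_inj)
  ultimately show ?thesis using finite_vimageI[OF finite_keys[of q]] by simp
qed

lemma dom1_iff: "S \<in> dom1 q \<longleftrightarrow> Poly_Mapping.lookup q (Poly_Mapping.single S 1) \<noteq> 0"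
  unfolding dom1_def by (simp add: in_keys_iff)

lemma gamma_alt:
  assumes "finite X" "dom1 q \<subseteq> X"
  shows "gamma m q = (\<Sum>S\<in>X. Poly_Mapping.single 0 (Poly_Mapping.lookup q (Poly_Mapping.single S 1)) * Pr m S)"
  unfolding gamma_def2
  by (rule sum.mono_neutral_left[OF assms]) (auto simp: dom1_iff)

lemma gamma_add: "gamma m (p + q) = gamma m p + gamma m q"
proof -
  let ?X = "dom1 p \<union> dom1 q"
  have f: "finite ?X" by (simp add: finite_dom1)
  have "dom1 (p + q) \<subseteq> ?X" by (auto simp: dom1_iff lookup_add)
  then show ?thesis
    using gamma_alt[OF f, of "p+q" m] gamma_alt[OF f, of p m] gamma_alt[OF f, of q m]
    by (simp add: lookup_add single_add distrib_right sum.distrib)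
qed

lemma gamma_zero: "gamma m 0 = 0"
  unfolding gamma_def2 by (simp add: dom1_def)

lemma gamma_sum: "gamma m (sum f I) = (\<Sum>i\<in>I. gamma m (f i))"
  by (induction I rule: infinite_finite_induct) (auto simp: gamma_zero gamma_add)

lemma lookup_smul:
  fixes p :: "'e zpoly"
  shows "Poly_Mapping.lookup (Poly_Mapping.single 0 a * p) k = a * Poly_Mapping.lookup p k"
proof -
  have "Poly_Mapping.lookup (p * Poly_Mapping.single 0 a) k = Poly_Mapping.lookup p k * a"
    using lookup_mult_single_hit[of p 0 a k] by simp
  then show ?thesis by (simp add: mult.commute)
qed

lemma single0_mult: "Poly_Mapping.single 0 (a * b) = Poly_Mapping.single (0::'e mono) a * Poly_Mapping.single 0 (b::complex)"
  by (simp add: mult_single)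

lemma gamma_smul: "gamma m (Poly_Mapping.single 0 a * p) = Poly_Mapping.single 0 a * gamma m p"
proof -
  have f: "finite (dom1 p)" by (simp add: finite_dom1)
  have "dom1 (Poly_Mapping.single 0 a * p) \<subseteq> dom1 p" by (auto simp: dom1_iff lookup_smul)
  then show ?thesis
    using gamma_alt[OF f, of "Poly_Mapping.single 0 a * p" m] gamma_alt[OF f subset_refl, of m]
    by (simp add: lookup_smul sum_distrib_left single0_mult mult.assoc)
qed

lemma gamma_cong:
  assumes "\<And>S. Poly_Mapping.lookup p (Poly_Mapping.single S 1) = Poly_Mapping.lookup q (Poly_Mapping.single S 1)"
  shows "gamma m p = gamma m q"
proof -
  have "dom1 p = dom1 q" using assms by (auto simp: dom1_iff)
  then show ?thesis unfolding gamma_def2 using assms by simp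
qed

lemma gamma_zvar: "gamma m (zvar S) = Pr m S"
proof -
  have "S' \<in> dom1 (zvar S) \<longleftrightarrow> S' = S" for S' by (simp add: dom1_iff zvar_def lookup_single when_def)
  then have "dom1 (zvar S) = {S}" by blast
  then show ?thesis unfolding gamma_def2 by (simp add: zvar_def)
qed

lemma gamma_binom_mult:
  "gamma m (c * (zvar S * zvar T - zvar U * zvar V)) = 0"
proof -
  have "gamma m (c * (zvar S * zvar T - zvar U * zvar V)) = gamma m 0"
    by (rule gamma_cong) (simp add: right_diff_distrib lookup_minus lookup_mult_zvar2)
  then show ?thesis by (simp add: gamma_zero)
qed

lemma lookup_mult_fcirc:
  "Poly_Mapping.lookup (c * f_circ C \<alpha> A') (Poly_Mapping.single X 1) =
     (\<Sum>i\<in>C. \<alpha> i * (if insert i A' = X then Poly_Mapping.lookup c 0 else 0))"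
proof -
  have "c * f_circ C \<alpha> A' = (\<Sum>i\<in>C. Poly_Mapping.single 0 (\<alpha> i) * (c * zvar (insert i A')))"
    unfolding f_circ_def by (simp add: sum_distrib_left algebra_simps)
  then show ?thesis by (simp add: lookup_sum lookup_smul lookup_mult_zvar)
qed

lemma gamma_fcirc_mult:
  "gamma m (c * f_circ C \<alpha> A') = Poly_Mapping.single 0 (Poly_Mapping.lookup c 0) * gamma m (f_circ C \<alpha> A')"
proof -
  have "gamma m (c * f_circ C \<alpha> A') = gamma m (Poly_Mapping.single 0 (Poly_Mapping.lookup c 0) * f_circ C \<alpha> A')"
    by (rule gamma_cong) (unfold lookup_mult_fcirc lookup_single_eq, rule refl)
  then show ?thesis by (simp add: gamma_smul)
qed

lemma gamma_fcirc: "gamma m (f_circ C \<alpha> A') = (\<Sum>i\<in>C. Poly_Mapping.single 0 (\<alpha> i) * Pr m (insert i A'))"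
proof -
  have "gamma m (f_circ C \<alpha> A') = (\<Sum>i\<in>C. gamma m (Poly_Mapping.single 0 (\<alpha> i) * zvar (insert i A')))"
    unfolding f_circ_def by (rule gamma_sum)
  also have "\<dots> = (\<Sum>i\<in>C. Poly_Mapping.single 0 (\<alpha> i) * Pr m (insert i A'))"
    by (simp only: gamma_smul gamma_zvar)
  finally show ?thesis .
qed



definition tk :: "nat \<Rightarrow> nat \<Rightarrow> (nat \<Rightarrow> complex) \<Rightarrow> (nat \<times> nat \<Rightarrow> complex)" where
  "tk m n x = (\<lambda>(i,j). if i < m \<and> j < n then x j else 0)"

lemma tk_mem: "x \<in> L \<Longrightarrow> tk m n x \<in> thicken m n L"
  unfolding thicken_def tk_def by blast

lemma tk_elim: "y \<in> thicken m n L \<Longrightarrow> \<exists>x\<in>L. y = tk m n x"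
  unfolding thicken_def tk_def by blast

lemma tk_eval: "c \<in> thick_ground m n \<Longrightarrow> tk m n x c = x (snd c)"
  unfolding thick_ground_def tk_def by (cases c) auto

lemma sum_tk:
  assumes "D \<subseteq> thick_ground m n"
  shows "(\<Sum>c\<in>D. \<alpha> c * tk m n x c) = (\<Sum>c\<in>D. \<alpha> c * x (snd c))"
  by (rule sum.cong) (use assms tk_eval in auto)

lemma dep_iff:
  assumes "D \<subseteq> thick_ground m n"
  shows "col_dep (thicken m n L) D \<alpha> \<longleftrightarrow> (\<exists>i\<in>D. \<alpha> i \<noteq> 0) \<and> (\<forall>x\<in>L. (\<Sum>c\<in>D. \<alpha> c * x (snd c)) = 0)"
proof -
  have "(\<forall>y\<in>thicken m n L. (\<Sum>c\<in>D. \<alpha> c * y c) = 0) \<longleftrightarrow> (\<forall>x\<in>L. (\<Sum>c\<in>D. \<alpha> c * x (snd c)) = 0)"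
  proof
    assume h: "\<forall>y\<in>thicken m n L. (\<Sum>c\<in>D. \<alpha> c * y c) = 0"
    show "\<forall>x\<in>L. (\<Sum>c\<in>D. \<alpha> c * x (snd c)) = 0"
    proof
      fix x assume "x \<in> L"
      then have "(\<Sum>c\<in>D. \<alpha> c * tk m n x c) = 0" using h tk_mem by blast
      then show "(\<Sum>c\<in>D. \<alpha> c * x (snd c)) = 0" using sum_tk[OF assms] by simp
    qed
  next
    assume h: "\<forall>x\<in>L. (\<Sum>c\<in>D. \<alpha> c * x (snd c)) = 0"
    show "\<forall>y\<in>thicken m n L. (\<Sum>c\<in>D. \<alpha> c * y c) = 0"
    proof
      fix y assume "y \<in> thicken m n L"
      then obtain x where x: "x \<in> L" "y = tk m n x" using tk_elim by blast
      then show "(\<Sum>c\<in>D. \<alpha> c * y c) = 0" using sum_tk[OF assms] h by simp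
    qed
  qed
  then show ?thesis unfolding col_dep_def by simp
qed

lemma circ_min: "is_circuit E L C \<Longrightarrow> D \<subset> C \<Longrightarrow> \<not> col_dep L D \<gamma>"
  unfolding is_circuit_def by blast

lemma noninj_case:
  assumes circ: "is_circuit (thick_ground m n) (thicken m n L) C"
    and dep: "col_dep (thicken m n L) C \<alpha>"
    and c12: "c1 \<in> C" "c2 \<in> C" "c1 \<noteq> c2" "snd c1 = snd c2"
  shows "C = {c1, c2} \<and> \<alpha> c1 + \<alpha> c2 = 0"
proof -
  have CE: "C \<subseteq> thick_ground m n" using circ unfolding is_circuit_def by blast
  have sub: "{c1, c2} \<subseteq> thick_ground m n" using CE c12 by blast
  have pd: "col_dep (thicken m n L) {c1, c2} (\<lambda>c. if c = c1 then 1 else -1)"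
    unfolding dep_iff[OF sub] using c12 by auto
  have C2: "C = {c1, c2}"
  proof (rule ccontr)
    assume "C \<noteq> {c1, c2}"
    then have "{c1, c2} \<subset> C" using c12 by blast
    then show False using circ_min[OF circ] pd by blast
  qed
  have "\<exists>x\<in>L. x (snd c1) \<noteq> 0"
  proof (rule ccontr)
    assume "\<not> (\<exists>x\<in>L. x (snd c1) \<noteq> 0)"
    then have "col_dep (thicken m n L) {c1} (\<lambda>_. 1)"
      using dep_iff[of "{c1}" m n L] sub by auto
    moreover have "{c1} \<subset> C" using C2 c12 by blast
    ultimately show False using circ_min[OF circ] by blast
  qed
  then obtain x where x: "x \<in> L" "x (snd c1) \<noteq> 0" by blast
  have "(\<Sum>c\<in>C. \<alpha> c * x (snd c)) = 0" using dep dep_iff[OF CE] x(1) by blast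
  then have "(\<alpha> c1 + \<alpha> c2) * x (snd c1) = 0" using C2 c12 by (simp add: distrib_right)
  then have "\<alpha> c1 + \<alpha> c2 = 0" using x(2) by simp
  with C2 show ?thesis by simp
qed

lemma inj_case:
  assumes circ: "is_circuit (thick_ground m n) (thicken m n L) C"
    and dep: "col_dep (thicken m n L) C \<alpha>"
    and inj: "inj_on snd C"
  shows "is_circuit {0..<n} L (snd ` C) \<and> col_dep L (snd ` C) (\<lambda>j. \<alpha> (the_inv_into C snd j))"
proof -
  define \<beta> where "\<beta> j = \<alpha> (the_inv_into C snd j)" for j
  have CE: "C \<subseteq> thick_ground m n" using circ unfolding is_circuit_def by blast
  have \<beta>c: "\<beta> (snd c) = \<alpha> c" if "c \<in> C" for c
    unfolding \<beta>_def using the_inv_into_f_f[OF inj that] by simp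
  have DE: "snd ` C \<subseteq> {0..<n}" using CE unfolding thick_ground_def by auto
  have sumD: "(\<Sum>j\<in>snd ` C. g j) = (\<Sum>c\<in>C. g (snd c))" for g :: "nat \<Rightarrow> complex"
    using sum.reindex[OF inj] by simp
  have depD: "col_dep L (snd ` C) \<beta>"
  proof -
    from dep obtain c where c: "c \<in> C" "\<alpha> c \<noteq> 0" unfolding col_dep_def by blast
    have "\<exists>j\<in>snd ` C. \<beta> j \<noteq> 0" using c \<beta>c by auto
    moreover have "\<forall>x\<in>L. (\<Sum>j\<in>snd ` C. \<beta> j * x j) = 0"
    proof
      fix x assume x: "x \<in> L"
      have "(\<Sum>j\<in>snd ` C. \<beta> j * x j) = (\<Sum>c\<in>C. \<alpha> c * x (snd c))"
        unfolding sumD by (rule sum.cong) (auto simp: \<beta>c)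
      also have "\<dots> = 0" using dep dep_iff[OF CE] x by blast
      finally show "(\<Sum>j\<in>snd ` C. \<beta> j * x j) = 0" .
    qed
    ultimately show ?thesis unfolding col_dep_def by blast
  qed
  have minD: "\<not> col_dep L D' \<gamma>" if D': "D' \<subset> snd ` C" for D' \<gamma>
  proof
    assume dD: "col_dep L D' \<gamma>"
    define C' where "C' = {c\<in>C. snd c \<in> D'}"
    have C'C: "C' \<subset> C"
    proof -
      obtain j where "j \<in> snd ` C" "j \<notin> D'" using D' by blast
      then obtain c where "c \<in> C" "snd c \<notin> D'" by blast
      then show ?thesis unfolding C'_def by blast
    qed
    have C'E: "C' \<subseteq> thick_ground m n" using C'C CE by blast
    have img: "snd ` C' = D'" unfolding C'_def using D' by blast
    have inj': "inj_on snd C'" using inj C'C by (meson inj_on_subset psubset_imp_subset)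
    have "col_dep (thicken m n L) C' (\<lambda>c. \<gamma> (snd c))"
      unfolding dep_iff[OF C'E]
    proof
      from dD obtain j where j: "j \<in> D'" "\<gamma> j \<noteq> 0" unfolding col_dep_def by blast
      then obtain c where "c \<in> C'" "snd c = j" using img by blast
      then show "\<exists>i\<in>C'. \<gamma> (snd i) \<noteq> 0" using j by blast
      show "\<forall>x\<in>L. (\<Sum>c\<in>C'. \<gamma> (snd c) * x (snd c)) = 0"
      proof
        fix x assume x: "x \<in> L"
        have "(\<Sum>c\<in>C'. \<gamma> (snd c) * x (snd c)) = (\<Sum>j\<in>snd ` C'. \<gamma> j * x j)"
          using sum.reindex[OF inj', of "\<lambda>j. \<gamma> j * x j"] by simp
        also have "\<dots> = 0" using dD x img unfolding col_dep_def by simp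
        finally show "(\<Sum>c\<in>C'. \<gamma> (snd c) * x (snd c)) = 0" .
      qed
    qed
    then show False using circ_min[OF circ C'C] by blast
  qed
  have "is_circuit {0..<n} L (snd ` C)"
    unfolding is_circuit_def using DE depD minD by blast
  then show ?thesis using depD unfolding \<beta>_def by simp
qed



lemma row_of_insert: "row_of (insert c A) k = (if k = fst c then insert (snd c) (row_of A k) else row_of A k)"
  unfolding row_of_def by (cases c) auto

lemma circ_gamma:
  assumes circ: "is_circuit (thick_ground m n) (thicken m n L) C"
    and dep: "col_dep (thicken m n L) C \<alpha>"
    and A: "A' \<subseteq> thick_ground m n - C"
    and m: "m = Suc m'"
  shows "gamma m (f_circ C \<alpha> A') \<in> SE_ideal {0..<n} L"
proof -
  define B where "B = row_of A'"
  define W where "W = Wr B m'"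
  define G where "G = Gp B m'"
  define I where "I = SE_ideal {0..<n} L"
  have CE: "C \<subseteq> thick_ground m n" using circ unfolding is_circuit_def by blast
  have finC: "finite C" using CE finite_subset unfolding thick_ground_def by blast
  have BE: "\<forall>k\<le>m'. B k \<subseteq> {0..<n}" using A unfolding B_def row_of_def thick_ground_def by auto
  have WE: "W \<subseteq> {0..<n}" using Wr_subE[OF BE] unfolding W_def .
  have GP: "G \<in> pvars {0..<n}" using Gp_pvars[OF BE] unfolding G_def .
  have cprop: "fst c \<le> m' \<and> snd c \<in> {0..<n} \<and> snd c \<notin> B (fst c)" if "c \<in> C" for c
    using that CE A m unfolding thick_ground_def B_def row_of_def by (cases c) auto
  have step: "Pr m (insert c A') - G * zvar (insert (snd c) W) \<in> I" if c: "c \<in> C" for c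
  proof -
    have "Pr m (insert c A') = (\<Prod>k<Suc m'. zvar (if k = fst c then insert (snd c) (B k) else B k))"
      unfolding Pr_def m B_def row_of_insert by simp
    then show ?thesis using lemA[OF BE, of "fst c" "snd c" L] cprop[OF c]
      unfolding I_def G_def W_def by simp
  qed
  define H where "H = (\<Sum>c\<in>C. Poly_Mapping.single 0 (\<alpha> c) * zvar (insert (snd c) W))"
  have diff: "gamma m (f_circ C \<alpha> A') - G * H \<in> I"
  proof -
    have "gamma m (f_circ C \<alpha> A') - G * H = (\<Sum>c\<in>C. Poly_Mapping.single 0 (\<alpha> c) * (Pr m (insert c A') - G * zvar (insert (snd c) W)))"
      unfolding gamma_fcirc H_def by (simp add: sum_distrib_left sum_subtractf algebra_simps)
    also have "\<dots> \<in> I"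
      unfolding I_def SE_ideal_def
      by (rule ideal_sum, rule ideal_mult[OF _ pvars_single0]) (use step in \<open>auto simp: I_def SE_ideal_def\<close>)
    finally show ?thesis .
  qed
  have GH: "G * H \<in> I"
  proof (cases "inj_on snd C")
    case True
    define \<beta> where "\<beta> j = \<alpha> (the_inv_into C snd j)" for j
    from inj_case[OF circ dep True] have ic: "is_circuit {0..<n} L (snd ` C)" "col_dep L (snd ` C) \<beta>"
      unfolding \<beta>_def by auto
    have \<beta>c: "\<beta> (snd c) = \<alpha> c" if "c \<in> C" for c
      unfolding \<beta>_def using the_inv_into_f_f[OF True that] by simp
    have WD: "W \<subseteq> {0..<n} - snd ` C"
    proof -
      have "snd c \<notin> W" if "c \<in> C" for c
        using cprop[OF that] Wr_sub[of "fst c" m' B] unfolding W_def by blast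
      then show ?thesis using WE by blast
    qed
    have "H = f_circ (snd ` C) \<beta> W"
      unfolding H_def f_circ_def sum.reindex[OF True] by (rule sum.cong) (auto simp: \<beta>c)
    moreover have "f_circ (snd ` C) \<beta> W \<in> SE_gens {0..<n} L"
      unfolding SE_gens_def using ic WD by blast
    ultimately show ?thesis unfolding I_def SE_ideal_def using ideal_mult[OF ideal_gen GP] by simp
  next
    case False
    then obtain c1 c2 where c12: "c1 \<in> C" "c2 \<in> C" "c1 \<noteq> c2" "snd c1 = snd c2"
      unfolding inj_on_def by blast
    from noninj_case[OF circ dep c12] have C2: "C = {c1, c2}" and a: "\<alpha> c1 + \<alpha> c2 = 0" by auto
    have "H = Poly_Mapping.single 0 (\<alpha> c1 + \<alpha> c2) * zvar (insert (snd c1) W)"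
      unfolding H_def C2 using c12 by (simp add: single_add distrib_right)
    then have "H = 0" using a by simp
    then show ?thesis unfolding I_def SE_ideal_def by (simp add: ideal_zero)
  qed
  have "gamma m (f_circ C \<alpha> A') = (gamma m (f_circ C \<alpha> A') - G * H) + G * H" by simp
  also have "\<dots> \<in> I" using diff GH unfolding I_def SE_ideal_def by (rule ideal_add)
  finally show ?thesis unfolding I_def .
qed

lemma part1:
  assumes q: "q \<in> SE_ideal (thick_ground m n) (thicken m n L)" and m: "m \<ge> 1"
  shows "gamma m q \<in> SE_ideal {0..<n} L"
proof -
  obtain m' where m': "m = Suc m'" using m by (cases m) auto
  obtain F c where F: "finite F" "F \<subseteq> SE_gens (thick_ground m n) (thicken m n L)" "q = (\<Sum>g\<in>F. c g * g)"
    using q unfolding SE_ideal_def gen_ideal_def by blast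
  have "gamma m q = (\<Sum>g\<in>F. gamma m (c g * g))" unfolding F(3) gamma_sum ..
  also have "\<dots> \<in> SE_ideal {0..<n} L" unfolding SE_ideal_def
  proof (rule ideal_sum)
    fix g assume "g \<in> F"
    then have "g \<in> SE_gens (thick_ground m n) (thicken m n L)" using F(2) by blast
    then consider (b) S T where "g = zvar S * zvar T - zvar (S \<union> T) * zvar (S \<inter> T)"
      | (f) C \<alpha> A' where "g = f_circ C \<alpha> A'" "is_circuit (thick_ground m n) (thicken m n L) C"
          "col_dep (thicken m n L) C \<alpha>" "A' \<subseteq> thick_ground m n - C"
      unfolding SE_gens_def by blast
    then show "gamma m (c g * g) \<in> gen_ideal {0..<n} (SE_gens {0..<n} L)"
    proof cases
      case b then show ?thesis by (simp add: gamma_binom_mult ideal_zero)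
    next
      case f
      have "gamma m (c g * g) = Poly_Mapping.single 0 (Poly_Mapping.lookup (c g) 0) * gamma m (f_circ C \<alpha> A')"
        unfolding f(1) by (rule gamma_fcirc_mult)
      then show ?thesis using ideal_mult[OF circ_gamma[OF f(2-4) m', unfolded SE_ideal_def] pvars_single0] by simp
    qed
  qed
  finally show ?thesis .
qed



definition dg :: "'a mono \<Rightarrow> nat" where
  "dg \<mu> = (\<Sum>S\<in>Poly_Mapping.keys \<mu>. Poly_Mapping.lookup \<mu> S)"

lemma dg_superset:
  assumes "finite K" "Poly_Mapping.keys \<mu> \<subseteq> K"
  shows "dg \<mu> = (\<Sum>S\<in>K. Poly_Mapping.lookup \<mu> S)"
  unfolding dg_def by (rule sum.mono_neutral_left[OF assms]) (auto simp: in_keys_iff)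

lemma decomp:
  fixes \<mu> :: "'a mono"
  shows "dg \<mu> = m \<Longrightarrow> \<exists>Bs. (\<forall>k<m. Bs k \<in> Poly_Mapping.keys \<mu>) \<and> \<mu> = (\<Sum>k<m. Poly_Mapping.single (Bs k) 1)"
proof (induction m arbitrary: \<mu>)
  case 0
  then have "\<forall>S\<in>Poly_Mapping.keys \<mu>. Poly_Mapping.lookup \<mu> S = 0" unfolding dg_def by simp
  then have "\<mu> = 0"
  proof (intro poly_mapping_eqI)
    fix S assume h: "\<forall>S\<in>Poly_Mapping.keys \<mu>. Poly_Mapping.lookup \<mu> S = 0"
    show "Poly_Mapping.lookup \<mu> S = Poly_Mapping.lookup 0 S"
      using h by (cases "S \<in> Poly_Mapping.keys \<mu>") (auto simp: in_keys_iff)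
  qed
  then show ?case by simp
next
  case (Suc m)
  then have "Poly_Mapping.keys \<mu> \<noteq> {}" unfolding dg_def by auto
  then obtain S where S: "S \<in> Poly_Mapping.keys \<mu>" by blast
  define \<mu>' where "\<mu>' = \<mu> - Poly_Mapping.single S 1"
  have lk: "Poly_Mapping.lookup \<mu> T = Poly_Mapping.lookup \<mu>' T + (1 when S = T)" for T
    using S unfolding \<mu>'_def by (cases "S = T") (auto simp: lookup_minus lookup_single in_keys_iff)
  have mu: "\<mu> = \<mu>' + Poly_Mapping.single S 1"
    by (rule poly_mapping_eqI) (simp add: lookup_add lookup_single lk)
  have ksub: "Poly_Mapping.keys \<mu>' \<subseteq> Poly_Mapping.keys \<mu>"
    using lk by (auto simp: in_keys_iff)
  have fin: "finite (Poly_Mapping.keys \<mu>)" by simp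
  have "dg \<mu> = (\<Sum>T\<in>Poly_Mapping.keys \<mu>. Poly_Mapping.lookup \<mu>' T + (1 when S = T))"
    unfolding dg_def by (rule sum.cong) (auto simp: lk)
  also have "\<dots> = dg \<mu>' + 1"
    using S by (simp add: sum.distrib dg_superset[OF fin ksub] when_def)
  finally have "dg \<mu>' = m" using Suc.prems by simp
  from Suc.IH[OF this] obtain Bs where Bs: "\<forall>k<m. Bs k \<in> Poly_Mapping.keys \<mu>'" "\<mu>' = (\<Sum>k<m. Poly_Mapping.single (Bs k) 1)"
    by blast
  define Bs' where "Bs' = Bs(m := S)"
  have "\<forall>k<Suc m. Bs' k \<in> Poly_Mapping.keys \<mu>" using Bs(1) ksub S unfolding Bs'_def by (auto simp: less_Suc_eq)
  moreover have "\<mu> = (\<Sum>k<Suc m. Poly_Mapping.single (Bs' k) 1)"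
    unfolding mu Bs(2) Bs'_def by simp
  ultimately show ?case by blast
qed

lemma prod_zvar: "(\<Prod>k<(m::nat). zvar (f k)) = Poly_Mapping.single (\<Sum>k<m. Poly_Mapping.single (f k) 1) 1"
  by (induction m) (simp_all add: zvar_def mult_single)

definition Sof :: "nat \<Rightarrow> (nat \<Rightarrow> nat set) \<Rightarrow> (nat \<times> nat) set" where
  "Sof m Bs = {(k, j). k < m \<and> j \<in> Bs k}"

lemma row_Sof: "k < m \<Longrightarrow> row_of (Sof m Bs) k = Bs k"
  unfolding row_of_def Sof_def by auto

lemma Pr_Sof: "Pr m (Sof m Bs) = (\<Prod>k<m. zvar (Bs k))"
  unfolding Pr_def by (rule prod.cong) (auto simp: row_Sof)

lemma part2:
  assumes p: "p \<in> hom_polys {0..<n} m"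
  shows "\<exists>q \<in> hom_polys (thick_ground m n) 1. p - gamma m q \<in> SE_ideal {0..<n} L"
proof -
  have "\<forall>\<mu>\<in>Poly_Mapping.keys p. \<exists>Bs. (\<forall>k<m. Bs k \<in> Poly_Mapping.keys \<mu>) \<and> \<mu> = (\<Sum>k<m. Poly_Mapping.single (Bs k) 1)"
    using p decomp unfolding hom_polys_def dg_def by blast
  then obtain BB where BB: "\<And>\<mu>. \<mu> \<in> Poly_Mapping.keys p \<Longrightarrow> (\<forall>k<m. BB \<mu> k \<in> Poly_Mapping.keys \<mu>) \<and> \<mu> = (\<Sum>k<m. Poly_Mapping.single (BB \<mu> k) 1)"
    by metis
  define S where "S \<mu> = Sof m (BB \<mu>)" for \<mu>
  define q where "q = (\<Sum>\<mu>\<in>Poly_Mapping.keys p. Poly_Mapping.single (Poly_Mapping.single (S \<mu>) (1::nat)) (Poly_Mapping.lookup p \<mu>))"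
  have pv: "p \<in> pvars {0..<n}" using p unfolding hom_polys_def by blast
  have SE: "S \<mu> \<subseteq> thick_ground m n" if "\<mu> \<in> Poly_Mapping.keys p" for \<mu>
  proof -
    have "BB \<mu> k \<subseteq> {0..<n}" if "k < m" for k
      using BB[OF \<open>\<mu> \<in> _\<close>] pv \<open>\<mu> \<in> _\<close> that unfolding pvars_def by blast
    then show ?thesis unfolding S_def Sof_def thick_ground_def by auto
  qed
  have sm: "Poly_Mapping.single (Poly_Mapping.single T 1) a = Poly_Mapping.single 0 a * zvar T" for T a
    unfolding zvar_def by (simp add: mult_single)
  have "gamma m q = (\<Sum>\<mu>\<in>Poly_Mapping.keys p. Poly_Mapping.single 0 (Poly_Mapping.lookup p \<mu>) * Pr m (S \<mu>))"
    unfolding q_def gamma_sum sm gamma_smul gamma_zvar ..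
  also have "\<dots> = (\<Sum>\<mu>\<in>Poly_Mapping.keys p. Poly_Mapping.single \<mu> (Poly_Mapping.lookup p \<mu>))"
  proof (rule sum.cong)
    fix \<mu> assume mu: "\<mu> \<in> Poly_Mapping.keys p"
    have "Pr m (S \<mu>) = Poly_Mapping.single \<mu> 1"
      unfolding S_def Pr_Sof prod_zvar using BB[OF mu] by simp
    then show "Poly_Mapping.single 0 (Poly_Mapping.lookup p \<mu>) * Pr m (S \<mu>) = Poly_Mapping.single \<mu> (Poly_Mapping.lookup p \<mu>)"
      by (simp add: mult_single)
  qed simp
  also have "\<dots> = p"
  proof (rule poly_mapping_eqI)
    fix \<kappa>
    show "Poly_Mapping.lookup (\<Sum>\<mu>\<in>Poly_Mapping.keys p. Poly_Mapping.single \<mu> (Poly_Mapping.lookup p \<mu>)) \<kappa> = Poly_Mapping.lookup p \<kappa>"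
      unfolding lookup_sum lookup_single by (simp add: when_def in_keys_iff)
  qed
  finally have gq: "gamma m q = p" .
  have "q \<in> hom_polys (thick_ground m n) 1"
  proof -
    have kq: "Poly_Mapping.keys q \<subseteq> (\<lambda>\<mu>. Poly_Mapping.single (S \<mu>) 1) ` Poly_Mapping.keys p"
    proof -
      have "Poly_Mapping.keys q \<subseteq> (\<Union>\<mu>\<in>Poly_Mapping.keys p. Poly_Mapping.keys (Poly_Mapping.single (Poly_Mapping.single (S \<mu>) (1::nat)) (Poly_Mapping.lookup p \<mu>)))"
        unfolding q_def by (rule keys_sum)
      also have "\<dots> \<subseteq> (\<lambda>\<mu>. Poly_Mapping.single (S \<mu>) 1) ` Poly_Mapping.keys p" by auto
      finally show ?thesis .
    qed
    show ?thesis unfolding hom_polys_def pvars_def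
    proof (intro CollectI conjI ballI)
      fix \<nu> T assume a: "\<nu> \<in> Poly_Mapping.keys q" "T \<in> Poly_Mapping.keys \<nu>"
      then obtain \<mu> where mu: "\<mu> \<in> Poly_Mapping.keys p" "\<nu> = Poly_Mapping.single (S \<mu>) 1" using kq by blast
      then have "T = S \<mu>" using a(2) by simp
      then show "T \<subseteq> thick_ground m n" using SE[OF mu(1)] by simp
    next
      fix \<nu> assume "\<nu> \<in> Poly_Mapping.keys q"
      then obtain \<mu> where "\<nu> = Poly_Mapping.single (S \<mu>) 1" using kq by blast
      then show "(\<Sum>T\<in>Poly_Mapping.keys \<nu>. Poly_Mapping.lookup \<nu> T) = 1" by simp
    qed
  qed
  moreover have "p - gamma m q \<in> SE_ideal {0..<n} L" unfolding gq SE_ideal_def by (simp add: ideal_zero)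
  ultimately show ?thesis by blast
qed

theorem lemma5p17:
  fixes L :: "(nat \<Rightarrow> complex) set" and n m :: nat
  assumes "is_csubspace {0..<n} L" and "m \<ge> 1"
  shows "(\<forall>q \<in> hom_polys (thick_ground m n) 1.
            q \<in> SE_ideal (thick_ground m n) (thicken m n L) \<longrightarrow> gamma m q \<in> SE_ideal {0..<n} L)
       \<and> (\<forall>p \<in> hom_polys {0..<n} m. \<exists>q \<in> hom_polys (thick_ground m n) 1.
            p - gamma m q \<in> SE_ideal {0..<n} L)"
  using part1[OF _ assms(2)] part2 by blast


end
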